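(* Let $n,m_1,m_2$ be nonnegative integers. Let $B_1(m_1,m_2,n)$ be the number of partitions of $n$ into parts congruent to $0,2,3,$ or $4\pmod 6$ having exactly $m_1$ parts congruent to $2\pmod 6$ and exactly $m_2$ parts congruent to $4\pmod 6$. Let $B_2(m_1,m_2,n)$ be the number of partitions of $n$ in which no two consecutive integers both appear as parts and all parts are at least $2$, having exactly $m_2$ parts congruent to $1\pmod 3$ and exactly $m_1$ parts congruent to $2\pmod 3$. Then $B_1(m_1,m_2,n)=B_2(m_1,m_2,n)$. Equivalently, if $\Lambda$ denotes the set of partitions with no part equal to $1$ in which no two consecutive integers both appear as parts, and $\#_{1,3}(\lambda)$, $\#_{2,3}(\lambda)$ denote the numbers of parts of $\lambda$ congruent to $1$ and $2\pmod 3$ respectively (counted with multiplicity), then as formal power series $$\sum_{\lambda\in\Lambda}A^{\#_{2,3}(\lambda)}C^{\#_{1,3}(\lambda)}q^{|\lambda|}=\frac{1}{(q^3;q^3)_\infty\,(Aq^2;q^6)_\infty\,(Cq^4;q^6)_\infty}.$$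
   Context: $|\lambda|$ is the sum of the parts of $\lambda$. Standard $q$-Pochhammer notation: $(a;q)_\infty=\prod_{j\ge0}(1-aq^j)$. Numbers of parts in a given residue class are counted with multiplicity. *)

theory Defs
  imports Main "HOL-Library.Multiset"
begin

definition partitions :: "nat \<Rightarrow> nat multiset set" where
  "partitions n = {p. (\<forall>x\<in>#p. 0 < x) \<and> sum_mset p = n}"

definition nparts_mod :: "nat \<Rightarrow> nat \<Rightarrow> nat multiset \<Rightarrow> nat" where
  "nparts_mod r m p = size (filter_mset (\<lambda>x. x mod m = r) p)"

definition B1 :: "nat \<Rightarrow> nat \<Rightarrow> nat \<Rightarrow> nat" where
  "B1 m1 m2 n = card {p \<in> partitions n.
      (\<forall>x\<in>#p. x mod 6 \<in> {0, 2, 3, 4}) \<and>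
      nparts_mod 2 6 p = m1 \<and> nparts_mod 4 6 p = m2}"

definition B2 :: "nat \<Rightarrow> nat \<Rightarrow> nat \<Rightarrow> nat" where
  "B2 m1 m2 n = card {p \<in> partitions n.
      (\<forall>x\<in>#p. 2 \<le> x) \<and> (\<forall>x\<in>#p. x + 1 \<notin># p) \<and>
      nparts_mod 1 3 p = m2 \<and> nparts_mod 2 3 p = m1}"

end

theory Submission
  imports Defs
begin


fun asc :: "nat \<Rightarrow> nat list \<Rightarrow> bool" where
  "asc x (y # _) = (y < x)"
| "asc x [] = False"

fun HB :: "nat list \<Rightarrow> nat" where
  "HB [] = 0"
| "HB (x # w) = (if asc x w then length w else 0) + HB w"

fun Wt :: "nat list \<Rightarrow> nat" where
  "Wt [] = 0"
| "Wt (f # p) = f * Suc (length p) + Wt p"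

fun P :: "nat list \<Rightarrow> nat list \<Rightarrow> nat list" where
  "P (x # U) (f # p) = (x + 3*f) # map (\<lambda>v. v + 3*(f + (if asc x U then 1 else 0))) (P U p)"
| "P _ _ = []"

function Q :: "nat list \<Rightarrow> nat list \<times> nat list" where
  "Q [] = ([], [])"
| "Q (v # pi) = (let u = v mod 3; f = v div 3;
      d = (if asc u (map (\<lambda>y. y mod 3) pi) then 1 else 0);
      r = Q (map (\<lambda>y. y - 3*(f + d)) pi) in (u # fst r, f # snd r))"
  by pat_completeness auto
termination by (relation "measure length") auto

lemma map_mod3_add: "map (\<lambda>v. v mod 3) (map (\<lambda>v. v + 3*(c::nat)) L) = map (\<lambda>v. v mod 3) L"
  by (induction L) auto

lemma sum_map_add: "sum_list (map (\<lambda>v. v + (c::nat)) L) = sum_list L + length L * c"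
  by (induction L) auto

lemma sub3_mod: "3*k \<le> (z::nat) \<Longrightarrow> (z - 3*k) mod 3 = z mod 3"
proof -
  assume "3*k \<le> z"
  then obtain w where "z = w + 3*k" by (metis le_add_diff_inverse2)
  then show ?thesis by simp
qed

lemma d3: "3*((y::nat) div 3) \<le> y"
  by (metis div_mult_mod_eq le_add1 mult.commute)

lemma sorted_sub: "sorted xs \<Longrightarrow> sorted (map (\<lambda>y. y - (c::nat)) xs)"
  by (induction xs) (auto intro: diff_le_mono)

lemma length_P: "length p = length U \<Longrightarrow> length (P U p) = length U"
  by (induction U p rule: P.induct) auto

lemma mod_P: "set U \<subseteq> {1,2} \<Longrightarrow> length p = length U \<Longrightarrow> map (\<lambda>v. v mod 3) (P U p) = U"
proof (induction U p rule: P.induct)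
  case (1 x U f p)
  have "map (\<lambda>v. v mod 3) (map (\<lambda>v. v + 3*(f + (if asc x U then 1 else 0))) (P U p))
        = map (\<lambda>v. v mod 3) (P U p)" by (rule map_mod3_add)
  moreover have "x mod 3 = x" using 1(2) by auto
  ultimately show ?case using 1 by (simp del: map_map)
qed auto

lemma ge_P: "set U \<subseteq> {1,2} \<Longrightarrow> length p = length U \<Longrightarrow> v \<in> set (P U p) \<Longrightarrow> hd U \<le> v"
proof (induction U p arbitrary: v rule: P.induct)
  case (1 x U f p)
  show ?case
  proof (cases "v = x + 3*f")
    case True then show ?thesis by simp
  next
    case False
    then obtain v' where v': "v' \<in> set (P U p)" "v = v' + 3*(f + (if asc x U then 1 else 0))"
      using 1(4) by auto
    show ?thesis
    proof (cases "asc x U")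
      case True
      then show ?thesis using v' 1(2) by auto
    next
      case False
      have "hd U \<le> v'" using 1 v' by auto
      moreover have "U \<noteq> []" using v' by (cases U; cases p) auto
      then have "x \<le> hd U" using False by (cases U) auto
      ultimately show ?thesis using v' by simp
    qed
  qed
qed auto

lemma sorted_P: "set U \<subseteq> {1,2} \<Longrightarrow> length p = length U \<Longrightarrow> sorted (P U p)"
proof (induction U p rule: P.induct)
  case (1 x U f p)
  have s: "sorted (P U p)" using 1 by auto
  have "\<forall>v\<in>set (P U p). x + 3*f \<le> v + 3*(f + (if asc x U then 1 else 0))"
  proof
    fix v assume v: "v \<in> set (P U p)"
    show "x + 3*f \<le> v + 3*(f + (if asc x U then 1 else 0))"
    proof (cases "asc x U")
      case True then show ?thesis using 1(2) by auto
    next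
      case False
      have "hd U \<le> v" using ge_P[of U p v] 1 v by auto
      moreover have "U \<noteq> []" using v by (cases U; cases p) auto
      then have "x \<le> hd U" using False by (cases U) auto
      ultimately show ?thesis using False by simp
    qed
  qed
  then show ?case using s by (auto simp: sorted_map)
qed auto

lemma sum_P: "length p = length U \<Longrightarrow> sum_list (P U p) = sum_list U + 3 * (HB U + Wt p)"
proof (induction U p rule: P.induct)
  case (1 x U f p)
  have l: "length (P U p) = length U" using 1 by (simp add: length_P)
  have "sum_list (map (\<lambda>v. v + 3*(f + (if asc x U then 1 else 0))) (P U p))
      = sum_list (P U p) + length (P U p) * (3*(f + (if asc x U then 1 else 0)))"
    by (rule sum_map_add)
  moreover have "HB (x # U) = (if asc x U then length U else 0) + HB U" by simp
  moreover have "Wt (f # p) = f * Suc (length p) + Wt p" by simp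
  ultimately show ?case using 1 l by (cases "asc x U") (simp_all add: algebra_simps)
qed auto

lemma Q_P: "set U \<subseteq> {1,2} \<Longrightarrow> length p = length U \<Longrightarrow> Q (P U p) = (U, p)"
proof (induction U p rule: P.induct)
  case (1 x U f p)
  let ?c = "3*(f + (if asc x U then 1 else 0))"
  have x: "x \<in> {1,2}" using 1 by auto
  have m: "map (\<lambda>y. y mod 3) (map (\<lambda>v. v + ?c) (P U p)) = U"
    using mod_P[of U p] 1 map_mod3_add[of "f + (if asc x U then 1 else 0)" "P U p"] by simp
  have xm: "(x + 3*f) mod 3 = x" "(x + 3*f) div 3 = f" using x by auto
  have mm: "map (\<lambda>y. y - ?c) (map (\<lambda>v. v + ?c) (P U p)) = P U p" by (simp add: comp_def)
  show ?case using 1 m xm mm by (simp add: Let_def del: map_map)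
qed auto

lemma P_Q: "sorted pi \<Longrightarrow> (\<forall>v\<in>set pi. v mod 3 \<noteq> 0) \<Longrightarrow> Q pi = (U, p) \<Longrightarrow>
    P U p = pi \<and> set U \<subseteq> {1,2} \<and> length p = length U"
proof (induction pi arbitrary: U p rule: Q.induct)
  case 1 then show ?case by auto
next
  case (2 v pi)
  define u where "u = v mod 3"
  define f where "f = v div 3"
  define d where "d = (if asc u (map (\<lambda>y. y mod 3) pi) then 1 else (0::nat))"
  define pi' where "pi' = map (\<lambda>y. y - 3*(f + d)) pi"
  have Qe: "Q (v # pi) = (u # fst (Q pi'), f # snd (Q pi'))"
    by (simp add: u_def f_def d_def pi'_def Let_def)
  have big: "\<forall>y\<in>set pi. 3*(f+d) \<le> y"
  proof
    fix y assume y: "y \<in> set pi"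
    have vy: "v \<le> y" using 2(2) y by auto
    show "3*(f+d) \<le> y"
    proof (cases "d = 1")
      case True
      then obtain y0 r where pi0: "pi = y0 # r" "y0 mod 3 < u"
        unfolding d_def by (cases pi) (auto split: if_splits)
      have "v \<le> y0" using 2(2) pi0 by auto
      moreover have "v = 3*(v div 3) + v mod 3" "y0 = 3*(y0 div 3) + y0 mod 3" by simp_all
      ultimately have A: "f + 1 \<le> y0 div 3" using pi0(2) unfolding u_def f_def by linarith
      have B: "y0 \<le> y" using 2(2) pi0 y by auto
      have "3*(f+1) \<le> 3*(y0 div 3)" using A by simp
      moreover have "3*(y0 div 3) \<le> y0" by (rule d3)
      ultimately have "3*(f+1) \<le> y" using B by linarith
      then show ?thesis using True by simp
    next
      case False then have "d = 0" unfolding d_def by auto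
      moreover have "3*(v div 3) \<le> v" by (rule d3)
      ultimately show ?thesis using vy unfolding f_def by simp
    qed
  qed
  have mod': "map (\<lambda>y. y mod 3) pi' = map (\<lambda>y. y mod 3) pi"
    unfolding pi'_def using big
  proof (induction pi)
    case (Cons a pi) then show ?case using sub3_mod[of "f+d" a] by auto
  qed simp
  have s': "sorted pi'" unfolding pi'_def using 2(2)
    by (intro sorted_sub) simp
  have nz': "\<forall>y\<in>set pi'. y mod 3 \<noteq> 0"
  proof
    fix y assume "y \<in> set pi'"
    then obtain z where z: "z \<in> set pi" "y = z - 3*(f+d)" unfolding pi'_def by auto
    have "3*(f+d) \<le> z" using big z by auto
    then have "y mod 3 = z mod 3" using z sub3_mod[of "f+d" z] by simp
    then show "y mod 3 \<noteq> 0" using 2(3) z by auto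
  qed
  obtain U' p' where Q': "Q pi' = (U', p')" by (cases "Q pi'")
  have IH: "P U' p' = pi' \<and> set U' \<subseteq> {1,2} \<and> length p' = length U'"
    using 2(1)[OF u_def f_def d_def, folded pi'_def] s' nz' Q' by auto
  have UU: "U = u # U'" "p = f # p'" using 2(4) Qe Q' by auto
  have mU': "map (\<lambda>y. y mod 3) pi' = U'" using mod_P[of U' p'] IH by simp
  have ascE: "asc u U' = asc u (map (\<lambda>y. y mod 3) pi)" using mU' mod' by simp
  have bk: "map (\<lambda>y. y + 3*(f+d)) pi' = pi" unfolding pi'_def using big
    by (induction pi) auto
  have u12: "u \<in> {1,2}" using 2(3) unfolding u_def by auto
  have vv: "u + 3*f = v" unfolding u_def f_def by simp
  show ?case using IH UU ascE bk u12 vv by (simp add: d_def)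
qed


fun Phi :: "nat list \<Rightarrow> nat list \<Rightarrow> nat list" where
  "Phi (x # U) (g # Gs) = (let ph = Phi U Gs in
     if asc x U then ph @ [g]
     else if g = 0 then 0 # ph
     else if ph = [] then [g]
     else (hd ph + 1) # tl ph @ [g - 1])"
| "Phi _ _ = []"

fun Psi :: "nat list \<Rightarrow> nat list \<Rightarrow> nat list" where
  "Psi (x # U) p = (if asc x U then last p # Psi U (butlast p)
     else if hd p = 0 then 0 # Psi U (tl p)
     else if U = [] then [hd p]
     else (last p + 1) # Psi U ((hd p - 1) # butlast (tl p)))"
| "Psi [] p = []"

lemma asc_0[simp]: "asc 0 w = False"
  by (cases w) auto

lemma length_Phi: "length Gs = length U \<Longrightarrow> length (Phi U Gs) = length U"
proof (induction U Gs rule: Phi.induct)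
  case (1 x U g Gs)
  then have l: "length (Phi U Gs) = length U" by simp
  show ?case
  proof (cases "\<not> asc x U \<and> g \<noteq> 0 \<and> Phi U Gs \<noteq> []")
    case True
    then obtain a t where "Phi U Gs = a # t" by (cases "Phi U Gs") auto
    then show ?thesis using True l by (auto simp: Let_def)
  next
    case False then show ?thesis using l by (auto simp: Let_def)
  qed
qed auto

lemma sum_Phi: "length Gs = length U \<Longrightarrow> sum_list (Phi U Gs) = sum_list Gs"
proof (induction U Gs rule: Phi.induct)
  case (1 x U g Gs)
  have IH: "sum_list (Phi U Gs) = sum_list Gs" using 1 by auto
  have l: "length (Phi U Gs) = length U" using 1 by (simp add: length_Phi)
  show ?case
  proof (cases "\<not> asc x U \<and> g \<noteq> 0 \<and> Phi U Gs \<noteq> []")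
    case True
    then obtain a t where "Phi U Gs = a # t" by (cases "Phi U Gs") auto
    then show ?thesis using True IH by (auto simp: Let_def)
  next
    case False then show ?thesis using IH by (auto simp: Let_def)
  qed
qed auto

lemma Psi_Phi: "length Gs = length U \<Longrightarrow> Psi U (Phi U Gs) = Gs"
proof (induction U Gs rule: Phi.induct)
  case (1 x U g Gs)
  have IH: "Psi U (Phi U Gs) = Gs" using 1 by auto
  have l: "length (Phi U Gs) = length U" using 1 by (simp add: length_Phi)
  show ?case
  proof (cases "\<not> asc x U \<and> g \<noteq> 0 \<and> Phi U Gs \<noteq> []")
    case True
    then obtain a t where at: "Phi U Gs = a # t" by (cases "Phi U Gs") auto
    have "U \<noteq> []" using l at by auto
    then show ?thesis using True IH at by (auto simp: Let_def)
  next
    case False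
    then show ?thesis using IH l by (auto simp: Let_def)
  qed
qed auto

lemma Phi_Psi: "length p = length U \<Longrightarrow> Phi U (Psi U p) = p"
proof (induction U arbitrary: p)
  case Nil then show ?case by simp
next
  case (Cons x U)
  then obtain a t where p: "p = a # t" by (cases p) auto
  show ?case
  proof (cases "asc x U")
    case True
    have lb: "length (butlast p) = length U" using Cons by simp
    have "Phi (x # U) (Psi (x # U) p) = Phi U (Psi U (butlast p)) @ [last p]"
      using True by (simp add: Let_def)
    also have "\<dots> = p" using Cons.IH[OF lb] p by simp
    finally show ?thesis .
  next
    case False
    show ?thesis
    proof (cases "a = 0")
      case True
      then show ?thesis using False Cons p by (simp add: Let_def)
    next
      case a: False
      show ?thesis
      proof (cases "U = []")
        case True
        then show ?thesis using False a Cons p by (simp add: Let_def)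
      next
        case U: False
        then obtain b s where ts: "t = b # s" using Cons p by (cases t) auto
        define q where "q = (a - 1) # butlast t"
        have lt: "length t = length U" using Cons.prems p by simp
        have lq: "length q = length U" using lt ts unfolding q_def by (cases s) auto
        have ps: "Psi (x # U) p = (last t + 1) # Psi U q"
          using False a U p ts unfolding q_def by simp
        have "Phi U (Psi U q) = q" using Cons.IH[OF lq] .
        then have "Phi (x # U) (Psi (x # U) p) = a # butlast t @ [last t]"
          using ps False a unfolding q_def by (simp add: Let_def)
        also have "\<dots> = p" using p ts by simp
        finally show ?thesis .
      qed
    qed
  qed
qed

fun blocks :: "nat list \<Rightarrow> nat list \<Rightarrow> nat list" where
  "blocks (x # U) (g # Gs) = x # (replicate g 0 @ blocks U Gs)"
| "blocks _ _ = []"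

lemma length_blocks: "length Gs = length U \<Longrightarrow> length (blocks U Gs) = length U + sum_list Gs"
  by (induction U Gs rule: blocks.induct) auto

lemma HB_zeros: "HB (replicate z 0 @ w) = HB w"
  by (induction z) auto

lemma asc_zeros: "0 < x \<Longrightarrow> asc x (replicate g 0 @ w) = (if g > 0 then True else asc x w)"
  by (cases g) auto

lemma asc_blocks: "length Gs = length U \<Longrightarrow> asc x (blocks U Gs) = asc x U"
  by (cases "(U,Gs)" rule: blocks.cases) auto

lemma Wt_snoc: "Wt (p @ [g]) = Wt p + sum_list p + g"
  by (induction p) auto

lemma HB_blocks: "set U \<subseteq> {1,2} \<Longrightarrow> length Gs = length U \<Longrightarrow>
    HB (blocks U Gs) = HB U + Wt (Phi U Gs)"
proof (induction U Gs rule: Phi.induct)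
  case (1 x U g Gs)
  have IH: "HB (blocks U Gs) = HB U + Wt (Phi U Gs)" using 1 by auto
  have l: "length (Phi U Gs) = length U" using 1 by (simp add: length_Phi)
  have s: "sum_list (Phi U Gs) = sum_list Gs" using 1 by (simp add: sum_Phi)
  have lb: "length (blocks U Gs) = length U + sum_list Gs" using 1 by (simp add: length_blocks)
  have x0: "0 < x" using 1 by auto
  have HBb: "HB (blocks (x # U) (g # Gs)) =
     (if g > 0 \<or> asc x U then g + length U + sum_list Gs else 0) + HB (blocks U Gs)"
    using x0 lb asc_blocks[of Gs U x] 1(3) by (simp add: asc_zeros HB_zeros)
  show ?case
  proof (cases "asc x U")
    case True
    then show ?thesis using HBb IH l s by (simp add: Let_def Wt_snoc)
  next
    case F: False
    show ?thesis
    proof (cases "g = 0")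
      case True
      then show ?thesis using F HBb IH by (simp add: Let_def)
    next
      case g: False
      show ?thesis
      proof (cases "Phi U Gs = []")
        case True
        then have "U = []" using l by simp
        then show ?thesis using F g HBb True 1 by (cases Gs) (auto simp: Let_def)
      next
        case False
        then obtain a t where at: "Phi U Gs = a # t" by (cases "Phi U Gs") auto
        have "Wt (Phi (x # U) (g # Gs)) = (a+1) * Suc (Suc (length t)) + Wt t + sum_list t + (g - 1)"
          using F g at by (simp add: Let_def Wt_snoc)
        moreover have "Wt (Phi U Gs) = a * Suc (length t) + Wt t" using at by simp
        moreover have "sum_list Gs = a + sum_list t" using s at by simp
        moreover have "length U = Suc (length t)" using l at by simp
        ultimately show ?thesis using F g HBb IH by (simp add: algebra_simps)
      qed
    qed
  qed
qed auto

function parseB :: "nat list \<Rightarrow> nat list \<times> nat list" where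
  "parseB [] = ([], [])"
| "parseB (x # w) = (let r = parseB (dropWhile (\<lambda>y. y = 0) w) in
     (x # fst r, length (takeWhile (\<lambda>y. y = 0) w) # snd r))"
  by pat_completeness auto
termination by (relation "measure length") (auto simp: le_imp_less_Suc length_dropWhile_le)

lemma dropWhile_zeros: "w = [] \<or> hd w \<noteq> 0 \<Longrightarrow> dropWhile (\<lambda>y. y = 0) (replicate g 0 @ w) = w"
  by (induction g) (cases w; auto)+

lemma takeWhile_zeros: "w = [] \<or> hd w \<noteq> 0 \<Longrightarrow> takeWhile (\<lambda>y. y = 0) (replicate g 0 @ w) = replicate g 0"
  by (induction g) (cases w; auto)+

lemma hd_blocks: "set U \<subseteq> {1,2} \<Longrightarrow> length Gs = length U \<Longrightarrow> blocks U Gs = [] \<or> hd (blocks U Gs) \<noteq> 0"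
  by (cases "(U,Gs)" rule: blocks.cases) auto

lemma parseB_blocks: "set U \<subseteq> {1,2} \<Longrightarrow> length Gs = length U \<Longrightarrow> parseB (blocks U Gs) = (U, Gs)"
proof (induction U Gs rule: blocks.induct)
  case (1 x U g Gs)
  have h: "blocks U Gs = [] \<or> hd (blocks U Gs) \<noteq> 0" using 1 hd_blocks by auto
  show ?case using 1 h by (simp add: Let_def dropWhile_zeros takeWhile_zeros)
qed auto

lemma takeWhile_rep: "takeWhile (\<lambda>y. y = 0) w = replicate (length (takeWhile (\<lambda>y. y = 0) w)) (0::nat)"
  by (induction w) auto

lemma blocks_parseB: "set w \<subseteq> {0,1,2} \<Longrightarrow> (w = [] \<or> hd w \<noteq> 0) \<Longrightarrow> parseB w = (U, Gs) \<Longrightarrow>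
   blocks U Gs = w \<and> length Gs = length U \<and> set U \<subseteq> {1,2}"
proof (induction w arbitrary: U Gs rule: parseB.induct)
  case 1 then show ?case by auto
next
  case (2 x w)
  define w' where "w' = dropWhile (\<lambda>y. y = 0) w"
  obtain U' Gs' where r: "parseB w' = (U', Gs')" by (cases "parseB w'")
  have h: "w' = [] \<or> hd w' \<noteq> 0"
  proof (cases "w' = []")
    case False then show ?thesis using hd_dropWhile[of "\<lambda>y. y = 0" w] unfolding w'_def by simp
  qed simp
  have sw: "set w' \<subseteq> {0,1,2}" using 2(2) unfolding w'_def by (auto dest: set_dropWhileD)
  have IH: "blocks U' Gs' = w' \<and> length Gs' = length U' \<and> set U' \<subseteq> {1,2}"
    using 2(1)[folded w'_def] sw h r by auto
  have e: "U = x # U'" "Gs = length (takeWhile (\<lambda>y. y = 0) w) # Gs'"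
    using 2(4) r unfolding w'_def by (auto simp: Let_def)
  have ww: "w = replicate (length (takeWhile (\<lambda>y. y = 0) w)) 0 @ w'"
    unfolding w'_def by (metis takeWhile_dropWhile_id takeWhile_rep)
  have x: "x \<in> {1,2}" using 2(2,3) by auto
  show ?case using IH e ww x by (metis blocks.simps(1) insert_subset length_Cons list.simps(15))
qed


fun nasc :: "nat list \<Rightarrow> nat" where
  "nasc (x # y # r) = (if x < y then 1 else 0) + nasc (y # r)"
| "nasc _ = 0"

fun kap :: "nat list \<Rightarrow> nat list" where
  "kap [] = []"
| "kap (x # r) = (x + 3 * nasc (x # r)) # kap r"

lemma length_kap[simp]: "length (kap r) = length r"
  by (induction r) auto

lemma nasc_snoc: "ys \<noteq> [] \<Longrightarrow> nasc (ys @ [x]) = nasc ys + (if last ys < x then 1 else 0)"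
proof (induction ys rule: nasc.induct)
  case (1 a b r) then show ?case by auto
next
  case ("2_2" v) then show ?case by auto
qed auto

lemma kap_snoc: "ys \<noteq> [] \<Longrightarrow>
   kap (ys @ [x]) = map (\<lambda>v. v + 3*(if last ys < x then 1 else 0)) (kap ys) @ [x]"
proof (induction ys)
  case (Cons y ys)
  show ?case
  proof (cases "ys = []")
    case True then show ?thesis by simp
  next
    case False
    have "nasc ((y # ys) @ [x]) = nasc (y # ys) + (if last (y # ys) < x then 1 else 0)"
      by (rule nasc_snoc) simp
    then show ?thesis using Cons False by simp
  qed
qed simp

lemma sum_kap_rev: "sum_list (kap (rev w)) = sum_list w + 3 * HB w"
proof (induction w)
  case (Cons x w)
  show ?case
  proof (cases "w = []")
    case True then show ?thesis by simp
  next
    case False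
    have l: "last (rev w) = hd w" using False by (simp add: last_rev)
    have "kap (rev (x # w)) = map (\<lambda>v. v + 3*(if hd w < x then 1 else 0)) (kap (rev w)) @ [x]"
      using kap_snoc[of "rev w" x] False l by simp
    then have "sum_list (kap (rev (x # w))) = sum_list (kap (rev w)) + length w * (3*(if hd w < x then 1 else 0)) + x"
      by (simp add: sum_map_add)
    moreover have "asc x w = (hd w < x)" using False by (cases w) auto
    ultimately show ?thesis using Cons by (cases "hd w < x") (auto simp: algebra_simps)
  qed
qed simp

lemma sum_le_Wt: "sum_list p \<le> Wt p"
  by (induction p) auto

definition coreL :: "nat list \<Rightarrow> nat list" where
  "coreL r = (let pr = parseB (dropWhile (\<lambda>y. y = 0) (rev r)) in P (fst pr) (Phi (fst pr) (snd pr)))"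

definition coreinv :: "nat \<Rightarrow> nat list \<Rightarrow> nat list" where
  "coreinv L pil = (let q = Q pil; B = blocks (fst q) (Psi (fst q) (snd q)) in
      rev (replicate (L - length B) 0 @ B))"

lemma cnt_filter_map: "length (filter (\<lambda>v. v mod 3 = c) xs) = length (filter (\<lambda>v. v = c) (map (\<lambda>v. v mod 3) xs))"
  by (induction xs) auto

lemma cnt_blocks: "c \<noteq> 0 \<Longrightarrow> length Gs = length U \<Longrightarrow> length (filter (\<lambda>v. v = c) (blocks U Gs)) = length (filter (\<lambda>v. v = c) U)"
  by (induction U Gs rule: blocks.induct) auto

lemma cnt_zeros: "c \<noteq> 0 \<Longrightarrow> length (filter (\<lambda>v. v = c) (replicate z 0 @ w)) = length (filter (\<lambda>v. v = c) w)"
  by (induction z) auto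

lemma core_fwd:
  assumes r: "set r \<subseteq> {0,1,2}"
  shows "sorted (coreL r) \<and> (\<forall>v\<in>set (coreL r). v mod 3 \<noteq> 0) \<and>
         sum_list (coreL r) = sum_list (kap r) \<and>
         (\<forall>c\<in>{1,2}. length (filter (\<lambda>v. v mod 3 = c) (coreL r)) = length (filter (\<lambda>v. v = c) r)) \<and>
         coreinv (length r) (coreL r) = r"
proof -
  define w where "w = rev r"
  define w' where "w' = dropWhile (\<lambda>y. y = 0) w"
  obtain U Gs where pr: "parseB w' = (U, Gs)" by (cases "parseB w'")
  have "set w' \<subseteq> set w" unfolding w'_def by (auto dest: set_dropWhileD)
  then have sw: "set w' \<subseteq> {0,1,2}" using r unfolding w_def by auto
  have h: "w' = [] \<or> hd w' \<noteq> 0"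
  proof (cases "w' = []")
    case False then show ?thesis using hd_dropWhile[of "\<lambda>y. y = 0" w] unfolding w'_def by simp
  qed simp
  have B: "blocks U Gs = w' \<and> length Gs = length U \<and> set U \<subseteq> {1,2}"
    using blocks_parseB[OF sw h pr] .
  define p where "p = Phi U Gs"
  have lp: "length p = length U" using B unfolding p_def by (simp add: length_Phi)
  have c: "coreL r = P U p" unfolding coreL_def p_def using pr by (simp add: w'_def w_def)
  obtain z where ww: "w = replicate z 0 @ w'"
    unfolding w'_def by (metis takeWhile_dropWhile_id takeWhile_rep)
  have s1: "sorted (coreL r)" using c sorted_P B lp by simp
  have m: "map (\<lambda>v. v mod 3) (coreL r) = U" using c mod_P B lp by simp
  have s2: "\<forall>v\<in>set (coreL r). v mod 3 \<noteq> 0"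
  proof
    fix v assume "v \<in> set (coreL r)"
    then have "v mod 3 \<in> set U" using m by (metis image_eqI set_map)
    then show "v mod 3 \<noteq> 0" using B by auto
  qed
  have HBw: "HB w = HB U + Wt p"
    using ww HB_zeros HB_blocks[of U Gs] B unfolding p_def by metis
  have sw2: "sum_list w = sum_list U"
  proof -
    have "length Gs = length U \<Longrightarrow> sum_list (blocks U Gs) = sum_list U"
      by (induction U Gs rule: blocks.induct) auto
    then have "sum_list (blocks U Gs) = sum_list U" using B by simp
    then show ?thesis using ww B by (metis sum_list_append sum_list_replicate mult_0_right add_0)
  qed
  have s3: "sum_list (coreL r) = sum_list (kap r)"
    using c sum_P[OF lp] sum_kap_rev[of w] HBw sw2 unfolding w_def by simp
  have s4: "\<forall>c\<in>{1,2}. length (filter (\<lambda>v. v mod 3 = c) (coreL r)) = length (filter (\<lambda>v. v = c) r)"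
  proof
    fix cc :: nat assume cc: "cc \<in> {1,2}"
    have "length (filter (\<lambda>v. v = cc) r) = length (filter (\<lambda>v. v = cc) w)"
      unfolding w_def by (simp add: rev_filter[symmetric])
    also have "\<dots> = length (filter (\<lambda>v. v = cc) (blocks U Gs))"
      using ww B cnt_zeros[of cc] cc by auto
    also have "\<dots> = length (filter (\<lambda>v. v = cc) U)"
      using B cnt_blocks[of cc Gs U] cc by auto
    finally show "length (filter (\<lambda>v. v mod 3 = cc) (coreL r)) = length (filter (\<lambda>v. v = cc) r)"
      using cnt_filter_map[of cc "coreL r"] m by simp
  qed
  have QP: "Q (coreL r) = (U, p)" using c Q_P B lp by simp
  have PsiP: "Psi U p = Gs" unfolding p_def using Psi_Phi B by simp
  have lw: "length r = z + length (blocks U Gs)"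
    using ww B unfolding w_def by (metis length_append length_replicate length_rev)
  have s5: "coreinv (length r) (coreL r) = r"
  proof -
    have "coreinv (length r) (coreL r) = rev (replicate z 0 @ blocks U Gs)"
      unfolding coreinv_def using QP PsiP lw by (simp add: Let_def)
    also have "\<dots> = r" using ww B unfolding w_def by (metis rev_rev_ident)
    finally show ?thesis .
  qed
  show ?thesis using s1 s2 s3 s4 s5 by blast
qed

lemma length_Psi: "length p = length U \<Longrightarrow> length (Psi U p) = length U"
proof (induction U arbitrary: p)
  case (Cons x U)
  then obtain a t where p: "p = a # t" by (cases p) auto
  show ?case
  proof (cases "asc x U")
    case True then show ?thesis using Cons.IH[of "butlast p"] Cons.prems by simp
  next
    case False
    show ?thesis
    proof (cases "a = 0")
      case True then show ?thesis using False Cons p by simp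
    next
      case a: False
      show ?thesis
      proof (cases "U = []")
        case True then show ?thesis using False a p by simp
      next
        case U: False
        then obtain b s where ts: "t = b # s" using Cons p by (cases t) auto
        have lt: "length t = length U" using Cons.prems p by simp
        have "length ((a - 1) # butlast t) = length U" using lt ts by (cases s) auto
        then show ?thesis using Cons.IH False a U p by simp
      qed
    qed
  qed
qed simp

lemma set_blocks: "set (blocks U Gs) \<subseteq> insert 0 (set U)"
  by (induction U Gs rule: blocks.induct) auto

lemma core_bwd:
  assumes s: "sorted pil" and nz: "\<forall>v\<in>set pil. v mod 3 \<noteq> 0"
    and bd: "sum_list pil + length pil \<le> L"
  shows "length (coreinv L pil) = L \<and> set (coreinv L pil) \<subseteq> {0,1,2} \<and> coreL (coreinv L pil) = pil"
proof -
  obtain U p where q: "Q pil = (U, p)" by (cases "Q pil")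
  have PQ: "P U p = pil \<and> set U \<subseteq> {1,2} \<and> length p = length U" using P_Q[OF s nz q] .
  define Gs where "Gs = Psi U p"
  have lG: "length Gs = length U" unfolding Gs_def using length_Psi PQ by simp
  have PhG: "Phi U Gs = p" unfolding Gs_def using Phi_Psi PQ by simp
  define B where "B = blocks U Gs"
  have lB: "length B = length U + sum_list Gs" unfolding B_def using length_blocks lG by simp
  have sG: "sum_list Gs = sum_list p" using sum_Phi[OF lG] PhG by simp
  have eqs: "sum_list pil = sum_list U + 3 * (HB U + Wt p)" using sum_P PQ by metis
  have "sum_list p \<le> Wt p" by (rule sum_le_Wt)
  have "length pil = length U" using PQ length_P by metis
  have "Wt p \<le> 3 * (HB U + Wt p)" by simp
  also have "\<dots> \<le> sum_list pil" using eqs by simp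
  finally have "Wt p \<le> sum_list pil" .
  then have lBL: "length B \<le> L" using lB sG bd \<open>sum_list p \<le> Wt p\<close> \<open>length pil = length U\<close> by linarith
  have ci: "coreinv L pil = rev (replicate (L - length B) 0 @ B)"
    unfolding coreinv_def using q B_def Gs_def by (simp add: Let_def)
  have l1: "length (coreinv L pil) = L" using ci lBL by simp
  have l2: "set (coreinv L pil) \<subseteq> {0,1,2}" using ci set_blocks[of U Gs] PQ unfolding B_def by auto
  have hB: "B = [] \<or> hd B \<noteq> 0" unfolding B_def using hd_blocks PQ lG by simp
  have "dropWhile (\<lambda>y. y = 0) (rev (coreinv L pil)) = B" using ci dropWhile_zeros[OF hB] by simp
  moreover have "parseB B = (U, Gs)" unfolding B_def using parseB_blocks PQ lG by simp
  ultimately have l3: "coreL (coreinv L pil) = pil" unfolding coreL_def using PhG PQ by simp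
  show ?thesis using l1 l2 l3 by blast
qed


fun gd :: "nat list \<Rightarrow> bool" where
  "gd [] = True"
| "gd [x] = (x \<noteq> 1)"
| "gd (x # y # r) = (y \<le> x \<and> x - y \<noteq> 1 \<and> gd (y # r))"

definition comb :: "nat list \<Rightarrow> nat list \<Rightarrow> nat list" where
  "comb r s = map2 (\<lambda>k t. 2*k + 3*t) (kap r) s"

definition dr :: "nat list \<Rightarrow> nat list" where
  "dr l = map (\<lambda>z. (2*z) mod 3) l"

lemma comb_Nil[simp]: "comb [] s = []" "comb r [] = []"
  unfolding comb_def by (cases r; simp)+

lemma comb_Cons[simp]: "comb (x # r) (t # s) = (2*(x + 3*nasc (x # r)) + 3*t) # comb r s"
  unfolding comb_def by simp

lemma length_comb: "length s = length r \<Longrightarrow> length (comb r s) = length r"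
  unfolding comb_def by simp

lemma m3: "((a::nat) + 3*b) mod 3 = a mod 3"
  by simp

lemma elem_mod: "(x::nat) \<le> 2 \<Longrightarrow> (2*(2*(x + 3*N) + 3*t)) mod 3 = x"
proof -
  assume x: "x \<le> 2"
  have e: "2*(2*(x + 3*N) + 3*t) = x + 3*(x + 4*N + 2*t)" by simp
  have "x < 3" using x by simp
  show ?thesis by (subst e, subst m3) (simp add: \<open>x < 3\<close>)
qed

lemma dr_comb: "set r \<subseteq> {0,1,2} \<Longrightarrow> length s = length r \<Longrightarrow> dr (comb r s) = r"
proof (induction r s rule: list_induct2')
  case (4 x r t s)
  have "x \<le> 2" using 4 by auto
  then show ?case using 4 elem_mod[of x "nasc (x # r)" t] by (simp add: dr_def)
qed (auto simp: dr_def)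

lemma comb_inj: "set r \<subseteq> {0,1,2} \<Longrightarrow> set r' \<subseteq> {0,1,2} \<Longrightarrow> length s = length r \<Longrightarrow>
    length s' = length r' \<Longrightarrow> comb r s = comb r' s' \<Longrightarrow> r = r' \<and> s = s'"
proof -
  assume a: "set r \<subseteq> {0,1,2}" "set r' \<subseteq> {0,1,2}" "length s = length r" "length s' = length r'"
    "comb r s = comb r' s'"
  have rr: "r = r'" using dr_comb[of r s] dr_comb[of r' s'] a by metis
  have "length s = length s'" using a rr by simp
  then have "s = s'" using a(5) a(3) unfolding rr
  proof (induction s s' arbitrary: r' rule: list_induct2)
    case (Cons t s t' s')
    then obtain x r where "r' = x # r" by (cases r') auto
    then show ?case using Cons by auto
  qed simp
  then show ?thesis using rr by simp
qed

lemma three_ne1[simp]: "3 * (m::nat) \<noteq> Suc 0" "Suc 0 \<noteq> 3 * m"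
  by (cases m; simp)+

lemma gd_step: "(x::nat) \<le> 2 \<Longrightarrow> y \<le> 2 \<Longrightarrow> t' \<le> t \<Longrightarrow>
   2*(y + 3*N) + 3*t' \<le> 2*(x + 3*((if x < y then 1 else 0) + N)) + 3*t \<and>
   2*(x + 3*((if x < y then 1 else 0) + N)) + 3*t - (2*(y + 3*N) + 3*t') \<noteq> 1"
proof -
  assume a: "x \<le> 2" "y \<le> 2" "t' \<le> t"
  then obtain m where m: "t = t' + m" using le_Suc_ex by blast
  have "x = 0 \<or> x = 1 \<or> x = 2" "y = 0 \<or> y = 1 \<or> y = 2" using a by auto
  then show ?thesis using m by (elim disjE) (simp_all add: algebra_simps)
qed

lemma gd_comb: "set r \<subseteq> {0,1,2} \<Longrightarrow> length s = length r \<Longrightarrow> sorted_wrt (\<ge>) s \<Longrightarrow> gd (comb r s)"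
proof (induction r s rule: list_induct2')
  case (4 x r t s)
  show ?case
  proof (cases r)
    case Nil
    then have "s = []" using 4 by simp
    then show ?thesis using Nil by (cases t; cases x) auto
  next
    case (Cons y r')
    then obtain t' s' where s: "s = t' # s'" using 4 by (cases s) auto
    have tt: "t' \<le> t" using 4(4) s by simp
    have xy: "x \<le> 2" "y \<le> 2" using 4(2) Cons by auto
    have IH: "gd (comb r s)" using 4 by auto
    have n: "nasc (x # r) = (if x < y then 1 else 0) + nasc (y # r')" using Cons by simp
    show ?thesis using IH gd_step[OF xy tt, of "nasc (y # r')"] Cons s n by simp
  qed
qed auto

lemma head_base: "(x::nat) \<noteq> 1 \<Longrightarrow> \<exists>rx t. rx \<le> 2 \<and> x = 2*rx + 3*t"
proof -
  assume x: "x \<noteq> 1"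
  have d: "x = 3*(x div 3) + x mod 3" by simp
  have "x mod 3 = 0 \<or> x mod 3 = 1 \<or> x mod 3 = 2" by linarith
  then show ?thesis
  proof (elim disjE)
    assume "x mod 3 = 0" then show ?thesis using d by (intro exI[of _ 0] exI[of _ "x div 3"]) simp
  next
    assume j: "x mod 3 = 1"
    then have "x div 3 \<ge> 1" using d x by (cases "x div 3") auto
    then show ?thesis using d j by (intro exI[of _ 2] exI[of _ "x div 3 - 1"]) simp
  next
    assume "x mod 3 = 2" then show ?thesis using d by (intro exI[of _ 1] exI[of _ "x div 3"]) simp
  qed
qed

lemma head_step: "(ry::nat) \<le> 2 \<Longrightarrow> y \<le> x \<Longrightarrow> x - y \<noteq> 1 \<Longrightarrow> y = 2*(ry + 3*N) + 3*t2 \<Longrightarrow>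
   \<exists>rx t. rx \<le> 2 \<and> t2 \<le> t \<and> x = 2*(rx + 3*((if rx < ry then 1 else 0) + N)) + 3*t"
proof -
  assume a: "ry \<le> 2" "y \<le> x" "x - y \<noteq> 1" "y = 2*(ry + 3*N) + 3*t2"
  define d where "d = x - y"
  have xd: "x = y + d" using a unfolding d_def by simp
  define q where "q = d div 3"
  define j where "j = d mod 3"
  have d: "d = 3*q + j" "j < 3" unfolding q_def j_def by simp_all
  have ry: "ry = 0 \<or> ry = 1 \<or> ry = 2" using a by auto
  have "j = 0 \<or> j = 1 \<or> j = 2" using d by linarith
  then show ?thesis
  proof (elim disjE)
    assume j: "j = 0"
    have "x = 2*(ry + 3*((if ry < ry then 1 else 0) + N)) + 3*(t2 + q)" using xd d j a(4) by simp
    then show ?thesis using a(1) by (intro exI[of _ ry] exI[of _ "t2 + q"]) simp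
  next
    assume j: "j = 1"
    have "q \<noteq> 0" using d j a(3) xd by auto
    then obtain q' where q: "q = Suc q'" by (cases q) auto
    from ry show ?thesis
    proof (elim disjE)
      assume r: "ry = 0"
      have "x = 2*(2 + 3*((if 2 < ry then 1 else 0) + N)) + 3*(t2 + q')" using xd d j a(4) q r by simp
      then show ?thesis by (intro exI[of _ 2] exI[of _ "t2 + q'"]) simp
    next
      assume r: "ry = 1"
      have "x = 2*(0 + 3*((if 0 < ry then 1 else 0) + N)) + 3*(t2 + q')" using xd d j a(4) q r by simp
      then show ?thesis by (intro exI[of _ 0] exI[of _ "t2 + q'"]) simp
    next
      assume r: "ry = 2"
      have "x = 2*(1 + 3*((if 1 < ry then 1 else 0) + N)) + 3*(t2 + q')" using xd d j a(4) q r by simp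
      then show ?thesis by (intro exI[of _ 1] exI[of _ "t2 + q'"]) simp
    qed
  next
    assume j: "j = 2"
    from ry show ?thesis
    proof (elim disjE)
      assume r: "ry = 0"
      have "x = 2*(1 + 3*((if 1 < ry then 1 else 0) + N)) + 3*(t2 + q)" using xd d j a(4) r by simp
      then show ?thesis by (intro exI[of _ 1] exI[of _ "t2 + q"]) simp
    next
      assume r: "ry = 1"
      have "x = 2*(2 + 3*((if 2 < ry then 1 else 0) + N)) + 3*(t2 + q)" using xd d j a(4) r by simp
      then show ?thesis by (intro exI[of _ 2] exI[of _ "t2 + q"]) simp
    next
      assume r: "ry = 2"
      have "x = 2*(0 + 3*((if 0 < ry then 1 else 0) + N)) + 3*(t2 + q)" using xd d j a(4) r by simp
      then show ?thesis by (intro exI[of _ 0] exI[of _ "t2 + q"]) simp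
    qed
  qed
qed

lemma gd_exists: "gd l \<Longrightarrow> \<exists>r s. set r \<subseteq> {0,1,2} \<and> length r = length l \<and> length s = length l \<and>
    sorted_wrt (\<ge>) s \<and> comb r s = l"
proof (induction l rule: gd.induct)
  case 1 then show ?case by (intro exI[of _ "[]"]) simp
next
  case (2 x)
  then obtain rx t where "rx \<le> 2" "x = 2*rx + 3*t" using head_base[of x] by auto
  then show ?case by (intro exI[of _ "[rx]"] exI[of _ "[t]"]) auto
next
  case (3 x y l)
  then obtain r s where rs: "set r \<subseteq> {0,1,2}" "length r = length (y # l)" "length s = length (y # l)"
    "sorted_wrt (\<ge>) s" "comb r s = y # l" by auto
  then obtain ry r' t2 s' where e: "r = ry # r'" "s = t2 # s'" by (cases r; cases s) auto
  have ry: "ry \<le> 2" using rs e by auto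
  have yy: "y = 2*(ry + 3*nasc (ry # r')) + 3*t2" using rs(5) e by simp
  have xy: "y \<le> x" "x - y \<noteq> 1" using 3(2) by auto
  obtain rx t where h: "rx \<le> 2" "t2 \<le> t" "x = 2*(rx + 3*((if rx < ry then 1 else 0) + nasc (ry # r'))) + 3*t"
    using head_step[OF ry xy yy] by blast
  have s2: "sorted_wrt (\<ge>) (t # s)" using rs(4) e h(2) by auto
  have c: "comb (rx # r) (t # s) = x # y # l" using rs(5) e h(3) by simp
  show ?case using rs s2 c h(1) by (intro exI[of _ "rx # r"] exI[of _ "t # s"]) auto
qed

lemma sum_comb: "length s = length r \<Longrightarrow> sum_list (comb r s) = 2 * sum_list (kap r) + 3 * sum_list s"
proof (induction r s rule: list_induct2')
  case (4 x r t s) then show ?case by simp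
qed auto

lemma cnt_comb: "set r \<subseteq> {0,1,2} \<Longrightarrow> length s = length r \<Longrightarrow>
   length (filter (\<lambda>v. v mod 3 = 2) (comb r s)) = length (filter (\<lambda>v. v = 1) r) \<and>
   length (filter (\<lambda>v. v mod 3 = 1) (comb r s)) = length (filter (\<lambda>v. v = 2) r)"
proof (induction r s rule: list_induct2')
  case (4 x r t s)
  have x: "x = 0 \<or> x = 1 \<or> x = 2" using 4 by auto
  have e: "2*(x + 3*nasc (x # r)) + 3*t = 2*x + 3*(2*nasc (x # r) + t)" by simp
  have m: "(2*(x + 3*nasc (x # r)) + 3*t) mod 3 = (2*x) mod 3" by (subst e, rule m3)
  show ?case using 4 x m by auto
qed auto

lemma gd_sorted: "gd l \<Longrightarrow> sorted_wrt (\<ge>) l"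
  by (induction l rule: gd.induct) auto


definition dl :: "nat \<Rightarrow> nat multiset \<Rightarrow> nat list" where
  "dl L p = rev (sorted_list_of_multiset p) @ replicate (L - size p) 0"

lemma length_slm: "length (sorted_list_of_multiset p) = size p"
  by (metis mset_sorted_list_of_multiset size_mset)

lemma length_dl: "size p \<le> L \<Longrightarrow> length (dl L p) = L"
  unfolding dl_def by (simp add: length_slm)

lemma sorted_rep0: "sorted_wrt (\<ge>) (replicate k (0::nat))"
  by (induction k) auto

lemma sorted_dl: "sorted_wrt (\<ge>) (dl L p)"
proof -
  have "sorted_wrt (\<ge>) (rev (sorted_list_of_multiset p))"
    using sorted_sorted_list_of_multiset[of p] by (simp add: sorted_wrt_rev)
  then show ?thesis unfolding dl_def using sorted_rep0 by (simp add: sorted_wrt_append)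
qed

lemma mset_dl: "(\<forall>x\<in>#p. 0 < x) \<Longrightarrow> mset (filter (\<lambda>x. x \<noteq> 0) (dl L p)) = p"
proof -
  assume a: "\<forall>x\<in>#p. 0 < x"
  have "filter (\<lambda>x. x \<noteq> 0) (rev (sorted_list_of_multiset p)) = rev (sorted_list_of_multiset p)"
    using a by (auto simp: filter_id_conv)
  then show ?thesis unfolding dl_def by simp
qed

lemma sum_dl: "sum_list (dl L p) = sum_mset p"
  unfolding dl_def by (simp add: sum_mset_sum_list[symmetric])

lemma set_dl: "set (dl L p) \<subseteq> insert 0 (set_mset p)"
  unfolding dl_def by auto

lemma desc_split: "sorted_wrt (\<ge>) (l::nat list) \<Longrightarrow> l = filter (\<lambda>x. x \<noteq> 0) l @ replicate (length l - length (filter (\<lambda>x. x \<noteq> 0) l)) 0"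
proof (induction l)
  case (Cons a l)
  show ?case
  proof (cases "a = 0")
    case True
    then have "\<forall>x\<in>set l. x = 0" using Cons.prems by auto
    then have "filter (\<lambda>x. x \<noteq> 0) l = []" by (simp add: filter_empty_conv)
    moreover have "l = replicate (length l) 0" using \<open>\<forall>x\<in>set l. x = 0\<close> by (simp add: replicate_length_same)
    ultimately show ?thesis using True by simp
  next
    case False
    define F where "F = filter (\<lambda>x. x \<noteq> 0) l"
    define R where "R = replicate (length l - length F) (0::nat)"
    have e: "l = F @ R" using Cons unfolding F_def R_def by simp
    have "filter (\<lambda>x. x \<noteq> 0) (a # l) @ replicate (length (a # l) - length (filter (\<lambda>x. x \<noteq> 0) (a # l))) 0
          = a # (F @ R)" using False unfolding F_def R_def by simp
    then show ?thesis using e by simp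
  qed
qed simp

lemma dl_mset: "sorted_wrt (\<ge>) l \<Longrightarrow> length l = L \<Longrightarrow> dl L (mset (filter (\<lambda>x. x \<noteq> 0) l)) = l"
proof -
  assume s: "sorted_wrt (\<ge>) l" and L: "length l = L"
  define f where "f = filter (\<lambda>x. x \<noteq> 0) l"
  have sf: "sorted_wrt (\<ge>) f" unfolding f_def using s by (simp add: sorted_wrt_filter)
  have "sorted (rev f)" using sf by (simp add: sorted_wrt_rev)
  then have "sort f = rev f"
    by (metis mset_rev properties_for_sort)
  then have r: "rev (sorted_list_of_multiset (mset f)) = f" by (simp add: sorted_list_of_multiset_mset)
  have sz: "size (mset f) = length f" by simp
  have "dl L (mset f) = f @ replicate (L - length f) 0" unfolding dl_def using r sz by simp
  also have "\<dots> = l" using desc_split[OF s] L unfolding f_def by simp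
  finally show ?thesis unfolding f_def .
qed

lemma cnt_dl: "c \<noteq> 0 \<Longrightarrow> length (filter (\<lambda>v. v mod 3 = c) (dl L p)) = size (filter_mset (\<lambda>v. v mod 3 = c) p)"
proof -
  assume c: "c \<noteq> 0"
  have "length (filter (\<lambda>v. v mod 3 = c) (rev (sorted_list_of_multiset p))) = size (filter_mset (\<lambda>v. v mod 3 = c) p)"
    by (metis length_rev mset_filter mset_rev mset_sorted_list_of_multiset rev_filter size_mset)
  moreover have "filter (\<lambda>v. v mod 3 = c) (replicate k (0::nat)) = []" for k using c by (induction k) auto
  ultimately show ?thesis unfolding dl_def by simp
qed

lemma gd_iff: "sorted_wrt (\<ge>) l \<Longrightarrow> gd l \<longleftrightarrow> (1 \<notin> set l \<and> (\<forall>a\<in>set l. a \<noteq> 0 \<longrightarrow> a + 1 \<notin> set l))"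
proof (induction l rule: gd.induct)
  case (3 x y r)
  have le: "\<forall>a\<in>set (y # r). a \<le> y" using 3(2) by auto
  have yx: "y \<le> x" using 3(2) by auto
  have IH: "gd (y # r) \<longleftrightarrow> (1 \<notin> set (y # r) \<and> (\<forall>a\<in>set (y # r). a \<noteq> 0 \<longrightarrow> a + 1 \<notin> set (y # r)))"
    using 3 by auto
  show ?case
  proof
    assume g: "gd (x # y # r)"
    then have R: "1 \<notin> set (y # r) \<and> (\<forall>a\<in>set (y # r). a \<noteq> 0 \<longrightarrow> a + 1 \<notin> set (y # r))" using IH by simp
    have d: "x - y \<noteq> 1" using g by simp
    have x1: "x \<noteq> 1" using R d yx by (cases "y = 0") auto
    have "\<forall>a\<in>set (x # y # r). a \<noteq> 0 \<longrightarrow> a + 1 \<notin> set (x # y # r)"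
    proof (intro ballI impI)
      fix a assume a: "a \<in> set (x # y # r)" "a \<noteq> 0"
      show "a + 1 \<notin> set (x # y # r)"
      proof (cases "a = x")
        case True then show ?thesis using le yx by auto
      next
        case False
        then have aS: "a \<in> set (y # r)" using a by simp
        have "a + 1 \<noteq> x"
        proof
          assume ax: "a + 1 = x"
          have "a \<le> y" using le aS by auto
          then have "y = a \<or> y = a + 1" using ax yx by linarith
          then show False
          proof
            assume "y = a" then show False using d ax by simp
          next
            assume "y = a + 1" then show False using R aS a(2) by auto
          qed
        qed
        then show ?thesis using R aS a(2) by auto
      qed
    qed
    then show "1 \<notin> set (x # y # r) \<and> (\<forall>a\<in>set (x # y # r). a \<noteq> 0 \<longrightarrow> a + 1 \<notin> set (x # y # r))"
      using R x1 by auto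
  next
    assume R: "1 \<notin> set (x # y # r) \<and> (\<forall>a\<in>set (x # y # r). a \<noteq> 0 \<longrightarrow> a + 1 \<notin> set (x # y # r))"
    have d: "x - y \<noteq> 1"
    proof
      assume "x - y = 1"
      then have "x = y + 1" using yx by simp
      then show False using R by (cases "y = 0") auto
    qed
    have "gd (y # r)" using IH R by auto
    then show "gd (x # y # r)" using d yx by simp
  qed
qed auto


definition LL :: "nat \<Rightarrow> nat \<Rightarrow> nat \<Rightarrow> nat list set" where
  "LL n m1 m2 = {l. length l = n \<and> gd l \<and> sum_list l = n \<and>
      length (filter (\<lambda>v. v mod 3 = 1) l) = m2 \<and> length (filter (\<lambda>v. v mod 3 = 2) l) = m1}"

definition S2 :: "nat \<Rightarrow> nat \<Rightarrow> nat \<Rightarrow> nat multiset set" where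
  "S2 n m1 m2 = {p \<in> partitions n.
      (\<forall>x\<in>#p. 2 \<le> x) \<and> (\<forall>x\<in>#p. x + 1 \<notin># p) \<and>
      nparts_mod 1 3 p = m2 \<and> nparts_mod 2 3 p = m1}"

lemma size_le_sum: "(\<forall>x\<in>#p. 0 < x) \<Longrightarrow> size p \<le> sum_mset (p::nat multiset)"
proof (induction p)
  case (add x p) then show ?case by auto
qed simp

lemma cnt_filter_nz: "(c::nat) \<noteq> 0 \<Longrightarrow>
   size (filter_mset (\<lambda>v. v mod 3 = c) (mset (filter (\<lambda>x. x \<noteq> 0) (l::nat list)))) = length (filter (\<lambda>v. v mod 3 = c) l)"
proof -
  assume c: "c \<noteq> 0"
  have "filter (\<lambda>v. v mod 3 = c) (filter (\<lambda>x. x \<noteq> 0) l) = filter (\<lambda>v. v mod 3 = c) l"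
    using c by (induction l) auto
  then show ?thesis by (metis mset_filter size_mset)
qed

lemma sum_filter_nz: "sum_list (filter (\<lambda>x. x \<noteq> 0) l) = sum_list (l::nat list)"
  by (induction l) auto

lemma card_S2: "card (S2 n m1 m2) = card (LL n m1 m2)"
proof -
  have "bij_betw (dl n) (S2 n m1 m2) (LL n m1 m2)"
  proof (rule bij_betw_byWitness[where f' = "\<lambda>l. mset (filter (\<lambda>x. x \<noteq> 0) l)"])
    show "\<forall>p\<in>S2 n m1 m2. mset (filter (\<lambda>x. x \<noteq> 0) (dl n p)) = p"
      unfolding S2_def partitions_def using mset_dl by auto
    show "\<forall>l\<in>LL n m1 m2. dl n (mset (filter (\<lambda>x. x \<noteq> 0) l)) = l"
      unfolding LL_def using dl_mset gd_sorted by auto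
    show "dl n ` S2 n m1 m2 \<subseteq> LL n m1 m2"
    proof
      fix l assume "l \<in> dl n ` S2 n m1 m2"
      then obtain p where p: "p \<in> S2 n m1 m2" "l = dl n p" by auto
      have pos: "\<forall>x\<in>#p. 0 < x" and sm: "sum_mset p = n" using p(1) unfolding S2_def partitions_def by auto
      have sz: "size p \<le> n" using size_le_sum[OF pos] sm by simp
      have st: "set l \<subseteq> insert 0 (set_mset p)" using set_dl p(2) by simp
      have c2: "\<forall>x\<in>#p. 2 \<le> x" "\<forall>x\<in>#p. x + 1 \<notin># p" using p(1) unfolding S2_def by auto
      have "1 \<notin> set l" using st c2(1) by fastforce
      moreover have "\<forall>a\<in>set l. a \<noteq> 0 \<longrightarrow> a + 1 \<notin> set l" using st c2(2) by fastforce
      ultimately have g: "gd l" using gd_iff[of l] sorted_dl p(2) by simp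
      show "l \<in> LL n m1 m2" unfolding LL_def using g length_dl[OF sz] sum_dl sm cnt_dl p(1) p(2)
        unfolding S2_def nparts_mod_def by auto
    qed
    show "(\<lambda>l. mset (filter (\<lambda>x. x \<noteq> 0) l)) ` LL n m1 m2 \<subseteq> S2 n m1 m2"
    proof
      fix p assume "p \<in> (\<lambda>l. mset (filter (\<lambda>x. x \<noteq> 0) l)) ` LL n m1 m2"
      then obtain l where l: "l \<in> LL n m1 m2" "p = mset (filter (\<lambda>x. x \<noteq> 0) l)" by auto
      have g: "gd l" using l(1) unfolding LL_def by simp
      have R: "1 \<notin> set l \<and> (\<forall>a\<in>set l. a \<noteq> 0 \<longrightarrow> a + 1 \<notin> set l)" using gd_iff[of l] gd_sorted[OF g] g by simp
      have sp: "set_mset p = set l - {0}" using l(2) by auto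
      have "\<forall>x\<in>#p. 0 < x" using sp by auto
      moreover have "sum_mset p = n"
      proof -
        have "sum_mset p = sum_list (filter (\<lambda>x. x \<noteq> 0) l)" unfolding l(2) by (rule sum_mset_sum_list)
        then show ?thesis using l(1) sum_filter_nz[of l] unfolding LL_def by simp
      qed
      moreover have "\<forall>x\<in>#p. 2 \<le> x" using sp R by (auto simp: not_less_eq_eq le_Suc_eq)
      moreover have "\<forall>x\<in>#p. x + 1 \<notin># p" using sp R by auto
      moreover have "nparts_mod 1 3 p = m2" "nparts_mod 2 3 p = m1"
        using l cnt_filter_nz[of 1 l] cnt_filter_nz[of 2 l] unfolding LL_def nparts_mod_def by auto
      ultimately show "p \<in> S2 n m1 m2" unfolding S2_def partitions_def by auto
    qed
  qed
  then show ?thesis by (rule bij_betw_same_card)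
qed


definition PS :: "nat \<Rightarrow> nat \<Rightarrow> nat \<Rightarrow> (nat multiset \<times> nat multiset) set" where
  "PS n m1 m2 = {(pi, sg). (\<forall>x\<in>#pi. x mod 3 \<noteq> 0) \<and> (\<forall>x\<in>#sg. 0 < x) \<and>
      2 * sum_mset pi + 3 * sum_mset sg = n \<and>
      size (filter_mset (\<lambda>x. x mod 3 = 1) pi) = m1 \<and> size (filter_mset (\<lambda>x. x mod 3 = 2) pi) = m2}"

definition G :: "nat \<Rightarrow> nat multiset \<times> nat multiset \<Rightarrow> nat list" where
  "G n ps = comb (coreinv n (sorted_list_of_multiset (fst ps))) (dl n (snd ps))"

lemma len_filter_slm: "length (filter Pr (sorted_list_of_multiset (M::nat multiset))) = size (filter_mset Pr M)"
  by (metis mset_filter mset_sorted_list_of_multiset size_mset)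

lemma PS_facts:
  assumes "(pi, sg) \<in> PS n m1 m2"
  defines "r \<equiv> coreinv n (sorted_list_of_multiset pi)"
  shows "length r = n \<and> set r \<subseteq> {0,1,2} \<and> coreL r = sorted_list_of_multiset pi \<and> size sg \<le> n"
proof -
  let ?pl = "sorted_list_of_multiset pi"
  have nz: "\<forall>x\<in>#pi. x mod 3 \<noteq> 0" and sgp: "\<forall>x\<in>#sg. 0 < x"
    and sm: "2 * sum_mset pi + 3 * sum_mset sg = n" using assms(1) unfolding PS_def by auto
  have "\<forall>x\<in>#pi. 0 < x" using nz by (metis mod_0 neq0_conv)
  then have "size pi \<le> sum_mset pi" by (rule size_le_sum)
  then have bd: "sum_list ?pl + length ?pl \<le> n" using sm
    by (simp add: length_slm sum_mset_sum_list[symmetric])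
  have s1: "sorted ?pl" by simp
  have s2: "\<forall>v\<in>set ?pl. v mod 3 \<noteq> 0" using nz by simp
  have "size sg \<le> sum_mset sg" using size_le_sum[OF sgp] .
  then have "size sg \<le> n" using sm by linarith
  then show ?thesis using core_bwd[OF s1 s2 bd] unfolding r_def by blast
qed

lemma G_in: "ps \<in> PS n m1 m2 \<Longrightarrow> G n ps \<in> LL n m1 m2"
proof -
  assume a: "ps \<in> PS n m1 m2"
  obtain pi sg where ps: "ps = (pi, sg)" by (cases ps)
  let ?pl = "sorted_list_of_multiset pi"
  define r where "r = coreinv n ?pl"
  define s where "s = dl n sg"
  have F: "length r = n \<and> set r \<subseteq> {0,1,2} \<and> coreL r = ?pl \<and> size sg \<le> n"
    using PS_facts[of pi sg n m1 m2] a ps unfolding r_def by simp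
  have ls: "length s = n" unfolding s_def using F length_dl by simp
  have ss: "sorted_wrt (\<ge>) s" unfolding s_def by (rule sorted_dl)
  have cf: "sum_list (coreL r) = sum_list (kap r) \<and>
         (\<forall>c\<in>{1,2}. length (filter (\<lambda>v. v mod 3 = c) (coreL r)) = length (filter (\<lambda>v. v = c) r))"
    using core_fwd[of r] F by blast
  have g: "G n ps = comb r s" unfolding G_def ps r_def s_def by simp
  have lr: "length s = length r" using ls F by simp
  have sm: "2 * sum_mset pi + 3 * sum_mset sg = n" and c1: "size (filter_mset (\<lambda>x. x mod 3 = 1) pi) = m1"
    and c2: "size (filter_mset (\<lambda>x. x mod 3 = 2) pi) = m2" using a ps unfolding PS_def by auto
  have "sum_list (sorted_list_of_multiset pi) = sum_mset pi"
    by (metis mset_sorted_list_of_multiset sum_mset_sum_list)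
  then have "sum_list (kap r) = sum_mset pi" using cf F by simp
  moreover have "sum_list s = sum_mset sg" unfolding s_def by (rule sum_dl)
  ultimately have "sum_list (comb r s) = n"
    using sum_comb[OF lr] sm by simp
  moreover have "gd (comb r s)" using gd_comb F lr ss by simp
  moreover have "length (comb r s) = n" using length_comb lr F by simp
  moreover have "length (filter (\<lambda>v. v mod 3 = 2) (comb r s)) = m1"
    using cnt_comb[of r s] F lr cf c1 len_filter_slm by auto
  moreover have "length (filter (\<lambda>v. v mod 3 = 1) (comb r s)) = m2"
    using cnt_comb[of r s] F lr cf c2 len_filter_slm by auto
  ultimately show ?thesis unfolding LL_def g by simp
qed

lemma G_inj: "inj_on (G n) (PS n m1 m2)"
proof (rule inj_onI)
  fix ps ps' assume a: "ps \<in> PS n m1 m2" "ps' \<in> PS n m1 m2" "G n ps = G n ps'"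
  obtain pi sg where ps: "ps = (pi, sg)" by (cases ps)
  obtain pi' sg' where ps': "ps' = (pi', sg')" by (cases ps')
  define r where "r = coreinv n (sorted_list_of_multiset pi)"
  define r' where "r' = coreinv n (sorted_list_of_multiset pi')"
  have F: "length r = n \<and> set r \<subseteq> {0,1,2} \<and> coreL r = sorted_list_of_multiset pi \<and> size sg \<le> n"
    using PS_facts[of pi sg n m1 m2] a ps unfolding r_def by simp
  have F': "length r' = n \<and> set r' \<subseteq> {0,1,2} \<and> coreL r' = sorted_list_of_multiset pi' \<and> size sg' \<le> n"
    using PS_facts[of pi' sg' n m1 m2] a ps' unfolding r'_def by simp
  have "comb r (dl n sg) = comb r' (dl n sg')" using a(3) unfolding G_def ps ps' r_def r'_def by simp
  then have e: "r = r' \<and> dl n sg = dl n sg'"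
    using comb_inj[of r r' "dl n sg" "dl n sg'"] F F' length_dl by simp
  have "pi = pi'" using e F F' by (metis mset_sorted_list_of_multiset)
  moreover have "sg = sg'" using e mset_dl a ps ps' unfolding PS_def by (metis (no_types, lifting) case_prodD mem_Collect_eq)
  ultimately show "ps = ps'" using ps ps' by simp
qed

lemma G_surj: "l \<in> LL n m1 m2 \<Longrightarrow> l \<in> G n ` PS n m1 m2"
proof -
  assume a: "l \<in> LL n m1 m2"
  have g: "gd l" and ll: "length l = n" and sl: "sum_list l = n"
    and c2: "length (filter (\<lambda>v. v mod 3 = 1) l) = m2" and c1: "length (filter (\<lambda>v. v mod 3 = 2) l) = m1"
    using a unfolding LL_def by auto
  obtain r s where rs: "set r \<subseteq> {0,1,2}" "length r = length l" "length s = length l"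
    "sorted_wrt (\<ge>) s" "comb r s = l" using gd_exists[OF g] by blast
  have cf: "sorted (coreL r) \<and> (\<forall>v\<in>set (coreL r). v mod 3 \<noteq> 0) \<and>
         sum_list (coreL r) = sum_list (kap r) \<and>
         (\<forall>c\<in>{1,2}. length (filter (\<lambda>v. v mod 3 = c) (coreL r)) = length (filter (\<lambda>v. v = c) r)) \<and>
         coreinv (length r) (coreL r) = r" using core_fwd[OF rs(1)] .
  define pi where "pi = mset (coreL r)"
  define sg where "sg = mset (filter (\<lambda>x. x \<noteq> 0) s)"
  have slp: "sorted_list_of_multiset pi = coreL r" unfolding pi_def using cf
    by (simp add: sorted_list_of_multiset_mset sorted_sort_id)
  have dls: "dl n sg = s" unfolding sg_def using dl_mset rs ll by simp
  have Ge: "G n (pi, sg) = l" unfolding G_def using slp dls cf rs ll by simp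
  have lr: "length s = length r" using rs by simp
  have sumsg: "sum_mset sg = sum_list s"
    unfolding sg_def by (metis sum_mset_sum_list sum_filter_nz)
  have sumpi: "sum_mset pi = sum_list (kap r)" unfolding pi_def using cf by (simp add: sum_mset_sum_list)
  have "2 * sum_mset pi + 3 * sum_mset sg = n" using sum_comb[OF lr] rs(5) sl sumsg sumpi by simp
  moreover have "\<forall>x\<in>#pi. x mod 3 \<noteq> 0" unfolding pi_def using cf by simp
  moreover have "\<forall>x\<in>#sg. 0 < x" unfolding sg_def by simp
  moreover have "size (filter_mset (\<lambda>x. x mod 3 = 1) pi) = m1"
    using cnt_comb[OF rs(1) lr] rs(5) c1 cf unfolding pi_def by (metis insertI1 mset_filter size_mset)
  moreover have "size (filter_mset (\<lambda>x. x mod 3 = 2) pi) = m2"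
    using cnt_comb[OF rs(1) lr] rs(5) c2 cf unfolding pi_def by (metis insertI1 insertI2 mset_filter size_mset)
  ultimately have "(pi, sg) \<in> PS n m1 m2" unfolding PS_def by simp
  then show ?thesis using Ge by (metis image_eqI)
qed

lemma card_LL: "card (LL n m1 m2) = card (PS n m1 m2)"
proof -
  have "bij_betw (G n) (PS n m1 m2) (LL n m1 m2)"
    unfolding bij_betw_def using G_inj G_in G_surj by blast
  then show ?thesis by (metis bij_betw_same_card)
qed


definition S1 :: "nat \<Rightarrow> nat \<Rightarrow> nat \<Rightarrow> nat multiset set" where
  "S1 n m1 m2 = {p \<in> partitions n.
      (\<forall>x\<in>#p. x mod 6 \<in> {0, 2, 3, 4}) \<and>
      nparts_mod 2 6 p = m1 \<and> nparts_mod 4 6 p = m2}"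

definition f1 :: "nat multiset \<Rightarrow> nat multiset \<times> nat multiset" where
  "f1 p = (image_mset (\<lambda>x. x div 2) (filter_mset (\<lambda>x. x mod 3 \<noteq> 0) p),
           image_mset (\<lambda>x. x div 3) (filter_mset (\<lambda>x. x mod 3 = 0) p))"

definition g1 :: "nat multiset \<times> nat multiset \<Rightarrow> nat multiset" where
  "g1 ps = image_mset (\<lambda>x. 2*x) (fst ps) + image_mset (\<lambda>x. 3*x) (snd ps)"

lemma m6_2: "((2::nat)*x) mod 6 = 2*(x mod 3)"
  using mod_mult_mult1[of 2 x 3] by simp

lemma m6_3: "((3::nat)*x) mod 6 = 3*(x mod 2)"
  using mod_mult_mult1[of 3 x 2] by simp

lemma mod63: "(x::nat) mod 3 = (x mod 6) mod 3"
  by (simp add: mod_mod_cancel)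

lemma mod62: "(x::nat) mod 2 = (x mod 6) mod 2"
  by (simp add: mod_mod_cancel)

lemma even_of: "(x::nat) mod 6 \<in> {2,4} \<Longrightarrow> 2 * (x div 2) = x"
proof -
  assume "x mod 6 \<in> {2,4}"
  then have m: "x mod 2 = 0" using mod62[of x] by auto
  have "x div 2 * 2 + x mod 2 = x" by (rule div_mult_mod_eq)
  then show ?thesis using m by (simp add: mult.commute)
qed

lemma div2_mod3: "(x::nat) mod 6 \<in> {2,4} \<Longrightarrow> ((x div 2) mod 3 = 1 \<longleftrightarrow> x mod 6 = 2) \<and> ((x div 2) mod 3 = 2 \<longleftrightarrow> x mod 6 = 4)"
proof -
  assume a: "x mod 6 \<in> {2,4}"
  define m where "m = (x div 2) mod 3"
  have "(2 * (x div 2)) mod 6 = 2 * m" unfolding m_def by (rule m6_2)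
  then have e: "x mod 6 = 2 * m" using even_of[OF a] by simp
  show ?thesis unfolding m_def[symmetric] e by auto
qed

lemma three_of: "(x::nat) mod 3 = 0 \<Longrightarrow> 3 * (x div 3) = x"
proof -
  assume m: "x mod 3 = 0"
  have "x div 3 * 3 + x mod 3 = x" by (rule div_mult_mod_eq)
  then show ?thesis using m by (simp add: mult.commute)
qed

lemma size_filter_image: "size (filter_mset Pr (image_mset f M)) = size (filter_mset (\<lambda>x. Pr (f x)) M)"
  by (induction M) auto

lemma sum_image_mult: "sum_mset (image_mset (\<lambda>x. c * x) M) = c * sum_mset (M::nat multiset)"
  by (induction M) (auto simp: algebra_simps)

lemma image_id_on: "(\<forall>x\<in>#M. f x = x) \<Longrightarrow> image_mset f M = M"
  by (induction M) auto

lemma filt6: "c \<in> {2,4} \<Longrightarrow> filter_mset (\<lambda>x. x mod 6 = c) (filter_mset (\<lambda>x. (x::nat) mod 3 \<noteq> 0) p) = filter_mset (\<lambda>x. x mod 6 = c) p"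
proof -
  assume c: "c \<in> {2,4}"
  have "\<And>x. (x mod 3 \<noteq> 0 \<and> x mod 6 = c) = (x mod 6 = c)"
  proof
    fix x :: nat assume "x mod 6 = c"
    then show "x mod 3 \<noteq> 0 \<and> x mod 6 = c" using mod63[of x] c by auto
  qed simp
  then show ?thesis by (simp add: filter_filter_mset)
qed

lemma f1_in: "p \<in> S1 n m1 m2 \<Longrightarrow> f1 p \<in> PS n m1 m2"
proof -
  assume a: "p \<in> S1 n m1 m2"
  have pos: "\<forall>x\<in>#p. 0 < x" and sm: "sum_mset p = n" and md: "\<forall>x\<in>#p. x mod 6 \<in> {0,2,3,4}"
    and c1: "nparts_mod 2 6 p = m1" and c2: "nparts_mod 4 6 p = m2"
    using a unfolding S1_def partitions_def by auto
  define A where "A = filter_mset (\<lambda>x. x mod 3 \<noteq> 0) p"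
  define B where "B = filter_mset (\<lambda>x. x mod 3 = 0) p"
  have Am: "\<forall>x\<in>#A. x mod 6 \<in> {2,4}"
  proof
    fix x assume "x \<in># A"
    then have "x \<in># p" "x mod 3 \<noteq> 0" unfolding A_def by auto
    then show "x mod 6 \<in> {2,4}" using md mod63[of x] by auto
  qed
  have pA: "\<forall>x\<in># image_mset (\<lambda>x. x div 2) A. x mod 3 \<noteq> 0"
  proof
    fix y assume "y \<in># image_mset (\<lambda>x. x div 2) A"
    then obtain x where x: "x \<in># A" "y = x div 2" by auto
    have "x mod 6 \<in> {2,4}" using Am x(1) by auto
    then show "y mod 3 \<noteq> 0" using div2_mod3[of x] x(2) by auto
  qed
  have pB: "\<forall>x\<in># image_mset (\<lambda>x. x div 3) B. 0 < x"
  proof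
    fix y assume "y \<in># image_mset (\<lambda>x. x div 3) B"
    then obtain x where x: "x \<in># B" "y = x div 3" by auto
    have "0 < x" "x mod 3 = 0" using x(1) pos unfolding B_def by auto
    then have "0 < 3 * (x div 3)" using three_of[of x] by simp
    then show "0 < y" using x(2) by simp
  qed
  have iA: "image_mset (\<lambda>x. 2 * (x div 2)) A = A" using Am even_of by (intro image_id_on) auto
  have sA: "2 * sum_mset (image_mset (\<lambda>x. x div 2) A) = sum_mset A"
  proof -
    have "2 * sum_mset (image_mset (\<lambda>x. x div 2) A) = sum_mset (image_mset (\<lambda>x. 2 * x) (image_mset (\<lambda>x. x div 2) A))"
      by (rule sum_image_mult[symmetric])
    also have "image_mset (\<lambda>x. 2 * x) (image_mset (\<lambda>x. x div 2) A) = image_mset (\<lambda>x. 2 * (x div 2)) A"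
      by (simp add: multiset.map_comp comp_def)
    finally show ?thesis using iA by simp
  qed
  have iB: "image_mset (\<lambda>x. 3 * (x div 3)) B = B" unfolding B_def using three_of by (intro image_id_on) auto
  have sB: "3 * sum_mset (image_mset (\<lambda>x. x div 3) B) = sum_mset B"
  proof -
    have "3 * sum_mset (image_mset (\<lambda>x. x div 3) B) = sum_mset (image_mset (\<lambda>x. 3 * x) (image_mset (\<lambda>x. x div 3) B))"
      by (rule sum_image_mult[symmetric])
    also have "image_mset (\<lambda>x. 3 * x) (image_mset (\<lambda>x. x div 3) B) = image_mset (\<lambda>x. 3 * (x div 3)) B"
      by (simp add: multiset.map_comp comp_def)
    finally show ?thesis using iB by simp
  qed
  have "p = A + B" unfolding A_def B_def using multiset_partition[of p "\<lambda>x. x mod 3 \<noteq> 0"] by simp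
  then have "sum_mset A + sum_mset B = sum_mset p" by (metis sum_mset.union)
  then have S: "2 * sum_mset (image_mset (\<lambda>x. x div 2) A) + 3 * sum_mset (image_mset (\<lambda>x. x div 3) B) = n"
    using sA sB sm by simp
  have k1: "size (filter_mset (\<lambda>x. x mod 3 = 1) (image_mset (\<lambda>x. x div 2) A)) = m1"
  proof -
    have "size (filter_mset (\<lambda>x. x mod 3 = 1) (image_mset (\<lambda>x. x div 2) A))
          = size (filter_mset (\<lambda>x. (x div 2) mod 3 = 1) A)" by (rule size_filter_image)
    also have "filter_mset (\<lambda>x. (x div 2) mod 3 = 1) A = filter_mset (\<lambda>x. x mod 6 = 2) A"
    proof (rule filter_mset_cong)
      fix x assume "x \<in># A"
      then have "x mod 6 \<in> {2,4}" using Am by auto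
      then show "((x div 2) mod 3 = 1) = (x mod 6 = 2)" using div2_mod3[of x] by blast
    qed simp
    also have "filter_mset (\<lambda>x. x mod 6 = 2) A = filter_mset (\<lambda>x. x mod 6 = 2) p"
      unfolding A_def by (rule filt6) simp
    finally show ?thesis using c1 unfolding nparts_mod_def by simp
  qed
  have k2: "size (filter_mset (\<lambda>x. x mod 3 = 2) (image_mset (\<lambda>x. x div 2) A)) = m2"
  proof -
    have "size (filter_mset (\<lambda>x. x mod 3 = 2) (image_mset (\<lambda>x. x div 2) A))
          = size (filter_mset (\<lambda>x. (x div 2) mod 3 = 2) A)" by (rule size_filter_image)
    also have "filter_mset (\<lambda>x. (x div 2) mod 3 = 2) A = filter_mset (\<lambda>x. x mod 6 = 4) A"
    proof (rule filter_mset_cong)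
      fix x assume "x \<in># A"
      then have "x mod 6 \<in> {2,4}" using Am by auto
      then show "((x div 2) mod 3 = 2) = (x mod 6 = 4)" using div2_mod3[of x] by blast
    qed simp
    also have "filter_mset (\<lambda>x. x mod 6 = 4) A = filter_mset (\<lambda>x. x mod 6 = 4) p"
      unfolding A_def by (rule filt6) simp
    finally show ?thesis using c2 unfolding nparts_mod_def by simp
  qed
  show ?thesis unfolding f1_def PS_def using pA pB S k1 k2 A_def B_def by simp
qed


lemma filt_all: "(\<forall>x\<in>#M. Pr x) \<Longrightarrow> filter_mset Pr M = M"
  by (induction M) auto

lemma filt_none: "(\<forall>x\<in>#M. \<not> Pr x) \<Longrightarrow> filter_mset Pr M = {#}"
  by (induction M) auto

lemma mod3_2: "(y::nat) mod 3 \<noteq> 0 \<Longrightarrow> (2*y) mod 3 \<noteq> 0"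
proof -
  assume a: "y mod 3 \<noteq> 0"
  have "(2*y) mod 3 = ((2*y) mod 6) mod 3" by (rule mod63)
  also have "\<dots> = (2*(y mod 3)) mod 3" by (simp add: m6_2)
  finally have e: "(2*y) mod 3 = (2*(y mod 3)) mod 3" .
  have "y mod 3 = 1 \<or> y mod 3 = 2" using a by linarith
  then show ?thesis using e by auto
qed

lemma g1_f1: "p \<in> S1 n m1 m2 \<Longrightarrow> g1 (f1 p) = p"
proof -
  assume a: "p \<in> S1 n m1 m2"
  have md: "\<forall>x\<in>#p. x mod 6 \<in> {0,2,3,4}" using a unfolding S1_def by auto
  define A where "A = filter_mset (\<lambda>x. x mod 3 \<noteq> 0) p"
  define B where "B = filter_mset (\<lambda>x. x mod 3 = 0) p"
  have Am: "\<forall>x\<in>#A. x mod 6 \<in> {2,4}"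
  proof
    fix x assume "x \<in># A"
    then have "x \<in># p" "x mod 3 \<noteq> 0" unfolding A_def by auto
    then show "x mod 6 \<in> {2,4}" using md mod63[of x] by auto
  qed
  have iA: "image_mset (\<lambda>x. 2 * (x div 2)) A = A" using Am even_of by (intro image_id_on) auto
  have iB: "image_mset (\<lambda>x. 3 * (x div 3)) B = B" unfolding B_def using three_of by (intro image_id_on) auto
  have "p = A + B" unfolding A_def B_def using multiset_partition[of p "\<lambda>x. x mod 3 \<noteq> 0"] by simp
  moreover have "g1 (f1 p) = image_mset (\<lambda>x. 2 * (x div 2)) A + image_mset (\<lambda>x. 3 * (x div 3)) B"
    unfolding g1_def f1_def A_def B_def by (simp add: multiset.map_comp comp_def)
  ultimately show ?thesis using iA iB by simp
qed

lemma f1_g1: "ps \<in> PS n m1 m2 \<Longrightarrow> f1 (g1 ps) = ps"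
proof -
  assume a: "ps \<in> PS n m1 m2"
  obtain pi sg where ps: "ps = (pi, sg)" by (cases ps)
  have nz: "\<forall>x\<in>#pi. x mod 3 \<noteq> 0" using a ps unfolding PS_def by auto
  let ?M = "image_mset (\<lambda>x. 2*x) pi + image_mset (\<lambda>x. 3*x) sg"
  have f2: "filter_mset (\<lambda>x. x mod 3 \<noteq> 0) (image_mset (\<lambda>x. 2*x) pi) = image_mset (\<lambda>x. 2*x) pi"
    using nz mod3_2 by (intro filt_all) auto
  have f3: "filter_mset (\<lambda>x. x mod 3 \<noteq> 0) (image_mset (\<lambda>x. 3*x) sg) = {#}"
    by (intro filt_none) auto
  have f2': "filter_mset (\<lambda>x. x mod 3 = 0) (image_mset (\<lambda>x. 2*x) pi) = {#}"
    using nz mod3_2 by (intro filt_none) auto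
  have f3': "filter_mset (\<lambda>x. x mod 3 = 0) (image_mset (\<lambda>x. 3*x) sg) = image_mset (\<lambda>x. 3*x) sg"
    by (intro filt_all) auto
  have "image_mset (\<lambda>x. x div 2) (image_mset (\<lambda>x. 2*x) pi) = pi" by (simp add: multiset.map_comp comp_def)
  moreover have "image_mset (\<lambda>x. x div 3) (image_mset (\<lambda>x. 3*x) sg) = sg" by (simp add: multiset.map_comp comp_def)
  ultimately show ?thesis unfolding f1_def g1_def ps using f2 f3 f2' f3' by simp
qed

lemma g1_in: "ps \<in> PS n m1 m2 \<Longrightarrow> g1 ps \<in> S1 n m1 m2"
proof -
  assume a: "ps \<in> PS n m1 m2"
  obtain pi sg where ps: "ps = (pi, sg)" by (cases ps)
  have nz: "\<forall>x\<in>#pi. x mod 3 \<noteq> 0" and sp: "\<forall>x\<in>#sg. 0 < x"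
    and sm: "2 * sum_mset pi + 3 * sum_mset sg = n" and c1: "size (filter_mset (\<lambda>x. x mod 3 = 1) pi) = m1"
    and c2: "size (filter_mset (\<lambda>x. x mod 3 = 2) pi) = m2" using a ps unfolding PS_def by auto
  let ?M = "image_mset (\<lambda>x. 2*x) pi + image_mset (\<lambda>x. 3*x) sg"
  have pos: "\<forall>x\<in>#?M. 0 < x"
  proof
    fix x assume "x \<in># ?M"
    then consider y where "y \<in># pi" "x = 2*y" | z where "z \<in># sg" "x = 3*z" by auto
    then show "0 < x"
    proof cases
      case 1
      then have "y \<noteq> 0" using nz by (metis mod_0)
      then show ?thesis using 1 by simp
    next
      case 2 then show ?thesis using sp by simp
    qed
  qed
  have sum: "sum_mset ?M = n" using sm by (simp add: sum_image_mult)
  have md: "\<forall>x\<in>#?M. x mod 6 \<in> {0,2,3,4}"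
  proof
    fix x assume "x \<in># ?M"
    then consider y where "y \<in># pi" "x = 2*y" | z where "z \<in># sg" "x = 3*z" by auto
    then show "x mod 6 \<in> {0,2,3,4}"
    proof cases
      case 1
      have "y mod 3 < 3" by simp
      then have "y mod 3 = 0 \<or> y mod 3 = 1 \<or> y mod 3 = 2" by linarith
      then show ?thesis using 1 m6_2[of y] by auto
    next
      case 2
      have "z mod 2 < 2" by simp
      then have "z mod 2 = 0 \<or> z mod 2 = 1" by linarith
      then show ?thesis using 2 m6_3[of z] by auto
    qed
  qed
  have k1: "nparts_mod 2 6 ?M = m1"
  proof -
    have "nparts_mod 2 6 ?M = size (filter_mset (\<lambda>x. (2*x) mod 6 = 2) pi) + size (filter_mset (\<lambda>x. (3*x) mod 6 = 2) sg)"
      unfolding nparts_mod_def by (simp add: size_filter_image)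
    also have "filter_mset (\<lambda>x. (2*x) mod 6 = 2) pi = filter_mset (\<lambda>x. x mod 3 = 1) pi"
      by (simp add: m6_2)
    also have "filter_mset (\<lambda>x. (3*x) mod 6 = 2) sg = {#}"
    proof (intro filt_none ballI)
      fix z assume "z \<in># sg"
      have "z mod 2 < 2" by simp
      then have "z mod 2 = 0 \<or> z mod 2 = 1" by linarith
      then show "\<not> (3*z) mod 6 = 2" using m6_3[of z] by auto
    qed
    finally show ?thesis using c1 by simp
  qed
  have k2: "nparts_mod 4 6 ?M = m2"
  proof -
    have "nparts_mod 4 6 ?M = size (filter_mset (\<lambda>x. (2*x) mod 6 = 4) pi) + size (filter_mset (\<lambda>x. (3*x) mod 6 = 4) sg)"
      unfolding nparts_mod_def by (simp add: size_filter_image)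
    also have "filter_mset (\<lambda>x. (2*x) mod 6 = 4) pi = filter_mset (\<lambda>x. x mod 3 = 2) pi"
      by (simp add: m6_2)
    also have "filter_mset (\<lambda>x. (3*x) mod 6 = 4) sg = {#}"
    proof (intro filt_none ballI)
      fix z assume "z \<in># sg"
      have "z mod 2 < 2" by simp
      then have "z mod 2 = 0 \<or> z mod 2 = 1" by linarith
      then show "\<not> (3*z) mod 6 = 4" using m6_3[of z] by auto
    qed
    finally show ?thesis using c2 by simp
  qed
  show ?thesis unfolding S1_def partitions_def g1_def ps using pos sum md k1 k2 by simp
qed

lemma card_S1: "card (S1 n m1 m2) = card (PS n m1 m2)"
proof -
  have "bij_betw f1 (S1 n m1 m2) (PS n m1 m2)"
    by (rule bij_betw_byWitness[where f' = g1]) (auto simp: g1_f1 f1_g1 f1_in g1_in)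
  then show ?thesis by (rule bij_betw_same_card)
qed

theorem theorem3p1:
  fixes n m1 m2 :: nat
  shows "B1 m1 m2 n = B2 m1 m2 n"
proof -
  have "B1 m1 m2 n = card (S1 n m1 m2)" unfolding B1_def S1_def by simp
  also have "\<dots> = card (PS n m1 m2)" by (rule card_S1)
  also have "\<dots> = card (LL n m1 m2)" by (rule card_LL[symmetric])
  also have "\<dots> = card (S2 n m1 m2)" by (rule card_S2[symmetric])
  also have "\<dots> = B2 m1 m2 n" unfolding B2_def S2_def by simp
  finally show ?thesis .
qed


end
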